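(* For all $n\ge0$, \[ p_n^2=\delta_{n,0}+p_{n-2}^2+p_{n-3}^2+2\sum_{l=5}^n c_{l-5}p_{n-l}^2 . \]
   Context: The Narayana's cows numbers $c_n$ are defined by $c_n=\delta_{n,0}+c_{n-1}+c_{n-3}$ for $n\ge0$, $c_n=0$ for $n<0$. The Padovan numbers $p_n$ are defined by $p_n=\delta_{n,0}+p_{n-2}+p_{n-3}$ for $n\ge0$, $p_n=0$ for $n<0$. $\delta_{i,j}$ is $1$ if $i=j$ and $0$ otherwise. Empty sums are $0$. *)

theory Defs
  imports Main
begin

function cows :: "int \<Rightarrow> int" where
  "cows n = (if n < 0 then 0 else (if n = 0 then 1 else 0) + cows (n - 1) + cows (n - 3))"
  by auto
termination by (relation "measure (\<lambda>n. nat (n + 1))") auto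

function padovan :: "int \<Rightarrow> int" where
  "padovan n = (if n < 0 then 0 else (if n = 0 then 1 else 0) + padovan (n - 2) + padovan (n - 3))"
  by auto
termination by (relation "measure (\<lambda>n. nat (n + 1))") auto

declare cows.simps[simp del] padovan.simps[simp del]

end

theory Submission
  imports Defs
begin

lemma sum_shift_int:
  fixes h :: "int \<Rightarrow> int"
  shows "(\<Sum>l\<in>{a..b}. h l) = (\<Sum>j\<in>{0..b-a}. h (j + a))"
proof -
  have "{a..b} = (\<lambda>j. j + a) ` {0..b-a}"
    by (auto simp: image_iff intro!: exI[of _ "x - a" for x])
  moreover have "inj_on (\<lambda>j. j + a) {0..b-a}" by (auto simp: inj_on_def)
  ultimately have "sum h {a..b} = sum (h \<circ> (\<lambda>j. j + a)) {0..b-a}"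
    by (metis sum.reindex)
  then show ?thesis by simp
qed

lemma cows_neg: "n < 0 \<Longrightarrow> cows n = 0"
  by (subst cows.simps) simp

lemma pad_neg: "n < 0 \<Longrightarrow> padovan n = 0"
  by (subst padovan.simps) simp

lemma cows_rec: "n \<ge> 0 \<Longrightarrow> cows n = (if n = 0 then 1 else 0) + cows (n - 1) + cows (n - 3)"
  by (subst cows.simps) simp

lemma pad_rec: "n \<ge> 0 \<Longrightarrow> padovan n = (if n = 0 then 1 else 0) + padovan (n - 2) + padovan (n - 3)"
  by (subst padovan.simps) simp

definition S :: "int \<Rightarrow> int" where
  "S k = (\<Sum>j\<in>{0..k}. cows j * (padovan (k - j))^2)"

lemma cows_shift:
  fixes g :: "int \<Rightarrow> int" and d :: int
  assumes "d \<ge> 0"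
  shows "(\<Sum>j\<in>{0..k}. cows (j - d) * g (k - j)) = (\<Sum>j\<in>{0..k-d}. cows j * g (k - d - j))"
proof -
  have "(\<Sum>j\<in>{0..k}. cows (j - d) * g (k - j)) = (\<Sum>j\<in>{d..k}. cows (j - d) * g (k - j))"
    by (rule sum.mono_neutral_right) (use assms in \<open>auto simp: cows_neg\<close>)
  also have "\<dots> = (\<Sum>j\<in>{0..k-d}. cows j * g (k - d - j))"
    by (subst sum_shift_int) (simp add: algebra_simps)
  finally show ?thesis .
qed

lemma S_rec:
  assumes "k \<ge> 0"
  shows "S k = (padovan k)^2 + S (k - 1) + S (k - 3)"
proof -
  have "S k = (\<Sum>j\<in>{0..k}. ((if j = 0 then 1 else 0) + cows (j - 1) + cows (j - 3)) * (padovan (k - j))^2)"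
    unfolding S_def by (rule sum.cong) (auto simp: cows_rec)
  also have "\<dots> = (\<Sum>j\<in>{0..k}. (if j = 0 then 1 else 0) * (padovan (k - j))^2)
     + (\<Sum>j\<in>{0..k}. cows (j - 1) * (padovan (k - j))^2)
     + (\<Sum>j\<in>{0..k}. cows (j - 3) * (padovan (k - j))^2)"
    by (simp add: algebra_simps sum.distrib)
  also have "(\<Sum>j\<in>{0..k}. (if j = 0 then 1 else 0) * (padovan (k - j))^2) = (padovan k)^2"
  proof -
    have "(\<Sum>j\<in>{0..k}. (if j = 0 then 1 else 0) * (padovan (k - j))^2)
        = (\<Sum>j\<in>{0..k}. if j = 0 then (padovan (k - j))^2 else 0)"
      by (rule sum.cong) auto
    also have "\<dots> = (padovan k)^2" using assms by (simp add: sum.delta)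
    finally show ?thesis .
  qed
  also have "(\<Sum>j\<in>{0..k}. cows (j - 1) * (padovan (k - j))^2) = S (k - 1)"
    unfolding S_def by (subst cows_shift) simp_all
  also have "(\<Sum>j\<in>{0..k}. cows (j - 3) * (padovan (k - j))^2) = S (k - 3)"
    unfolding S_def by (subst cows_shift) simp_all
  finally show ?thesis .
qed

lemma S_neg: "k < 0 \<Longrightarrow> S k = 0"
  unfolding S_def by simp

lemma q_eq: "padovan m * padovan (m - 1) = S (m - 3)"
proof (induction "nat (m + 1)" arbitrary: m rule: less_induct)
  case less
  show ?case
  proof (cases "m \<ge> 3")
    case False
    then have "m < 0 \<or> m = 0 \<or> m = 1 \<or> m = 2" by auto
    then show ?thesis
      using False by (auto simp: S_neg pad_neg pad_rec[of 0] pad_rec[of 1] pad_rec[of 2])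
  next
    case True
    have r1: "padovan m = padovan (m - 2) + padovan (m - 3)" using True pad_rec[of m] by simp
    have r2: "padovan (m - 1) = padovan (m - 3) + padovan (m - 4)" using True pad_rec[of "m - 1"] by simp
    have "padovan m * padovan (m - 1) = padovan (m - 1) * padovan (m - 2) + (padovan (m - 3))^2
         + padovan (m - 3) * padovan (m - 4)"
      by (simp add: r1 r2 algebra_simps power2_eq_square)
    also have "padovan (m - 1) * padovan (m - 2) = S (m - 4)"
      using less(1)[of "m - 1"] True by simp
    also have "padovan (m - 3) * padovan (m - 4) = S (m - 6)"
      using less(1)[of "m - 3"] True by simp
    also have "S (m - 3) = (padovan (m - 3))^2 + S (m - 4) + S (m - 6)"
      using S_rec[of "m - 3"] True by simp
    ultimately show ?thesis by simp
  qed
qed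

theorem mainTheorem13:
  fixes n :: int
  assumes "n \<ge> 0"
  shows "(padovan n)^2 = (if n = 0 then 1 else 0) + (padovan (n - 2))^2 + (padovan (n - 3))^2
           + 2 * (\<Sum>l\<in>{5..n}. cows (l - 5) * (padovan (n - l))^2)"
proof (cases "n = 0")
  case True
  then show ?thesis by (simp add: pad_rec[of 0] pad_neg)
next
  case False
  have r: "padovan n = padovan (n - 2) + padovan (n - 3)" using assms False pad_rec[of n] by simp
  have "(\<Sum>l\<in>{5..n}. cows (l - 5) * (padovan (n - l))^2) = S (n - 5)"
    unfolding S_def by (subst sum_shift_int) (simp add: algebra_simps)
  also have "\<dots> = padovan (n - 2) * padovan (n - 3)"
    using q_eq[of "n - 2"] by simp
  finally show ?thesis using False by (simp add: r power2_eq_square algebra_simps)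
qed

end
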